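(* There exist two phylogenetic networks $N_1$ and $N_2$ of class I on the label set $S=\{1,2,3,4,5\}$ (in the sense defined in the context) such that $N_1\not\cong N_2$ but $\theta_{AB}(N_1)=\theta_{AB}(N_2)$.
   Context: A DAG $N=(V,E)$ is labeled in a finite set $S$ if its leaves (nodes of out-degree 0) are bijectively labeled by $S$; leaves are identified with their labels. A node is a tree node if its in-degree is at most 1 and a hybrid node if its in-degree is greater than 1; the root is the node of in-degree 0. Two DAGs labeled in $S$ are isomorphic ($\cong$) if there is an isomorphism of directed graphs preserving leaf labels. A path $u\rightsquigarrow v$ is a sequence of nodes $u=v_0,\dots,v_k=v$ with $(v_{i-1},v_i)\in E$. For a node $u$: $C(u)$ is the set of leaves that are descendants of $u$; $A(u)\subseteq C(u)$ is the set of leaves $s$ such that every path from a root to $s$ contains $u$; $B(u)=C(u)\setminus A(u)$. For an arc $e=(u,v)$, its $AB$-weighted tripartition $\theta_{AB}(e)$ is the triple $(A(v),B(v),S\setminus C(v))$ in which every leaf $s\in A(v)\cup B(v)$ is additionally weighted by the maximum number of hybrid nodes contained in a path from $v$ to $s$ (counting $v$ and $s$ themselves). $\theta_{AB}(N)=\{\theta_{AB}(e)\mid e\in E\}$. A phylogenetic network on $S$ (in this sense) is a rooted DAG labeled in $S$ such that: (1) every node has in-degree and out-degree in $\{0,1,2\}$ and no node has in-degree equal to its out-degree; (2) if a node has two children, at least one of them is a tree node; (3a) if $u_1,u_2$ are the parents of a hybrid node, there is no path $u_1\rightsquigarrow u_2$ nor $u_2\rightsquigarrow u_1$; (3b) if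 $u_1,u_2$ are the parents of a hybrid node $u$, $v_1,v_2$ are the parents of a hybrid node $v$, and there is a path $u_1\rightsquigarrow v_1$, then there is no path $v_2\rightsquigarrow u_1$ nor $v_2\rightsquigarrow u_2$. Such a network is of class I if every hybrid node has at least one parent that is a tree node. *)

theory Defs
  imports Main
begin

text \<open>A network is given by a node set V, an arc set E and a labelling lab
  of its nodes (only the values on leaves matter).\<close>

definition indeg :: "('v \<times> 'v) set \<Rightarrow> 'v \<Rightarrow> nat" where
  "indeg E v = card {u. (u, v) \<in> E}"

definition outdeg :: "('v \<times> 'v) set \<Rightarrow> 'v \<Rightarrow> nat" where
  "outdeg E v = card {w. (v, w) \<in> E}"

definition leaves :: "'v set \<Rightarrow> ('v \<times> 'v) set \<Rightarrow> 'v set" where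
  "leaves V E = {v \<in> V. outdeg E v = 0}"

definition roots :: "'v set \<Rightarrow> ('v \<times> 'v) set \<Rightarrow> 'v set" where
  "roots V E = {v \<in> V. indeg E v = 0}"

definition tree_node :: "('v \<times> 'v) set \<Rightarrow> 'v \<Rightarrow> bool" where
  "tree_node E v \<longleftrightarrow> indeg E v \<le> 1"

definition hybrid_node :: "('v \<times> 'v) set \<Rightarrow> 'v \<Rightarrow> bool" where
  "hybrid_node E v \<longleftrightarrow> indeg E v > 1"

definition paths :: "('v \<times> 'v) set \<Rightarrow> 'v \<Rightarrow> 'v \<Rightarrow> 'v list set" where
  "paths E u v = {xs. xs \<noteq> [] \<and> hd xs = u \<and> last xs = v \<and>
                      successively (\<lambda>a b. (a, b) \<in> E) xs}"

definition is_dag :: "'v set \<Rightarrow> ('v \<times> 'v) set \<Rightarrow> bool" where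
  "is_dag V E \<longleftrightarrow> finite V \<and> E \<subseteq> V \<times> V \<and> acyclic E"

definition rooted :: "'v set \<Rightarrow> ('v \<times> 'v) set \<Rightarrow> bool" where
  "rooted V E \<longleftrightarrow> (\<exists>!r. r \<in> roots V E)"

definition labeled_in :: "'v set \<Rightarrow> ('v \<times> 'v) set \<Rightarrow> ('v \<Rightarrow> 'l) \<Rightarrow> 'l set \<Rightarrow> bool" where
  "labeled_in V E lab S \<longleftrightarrow> bij_betw lab (leaves V E) S"

definition phylo_net :: "'v set \<Rightarrow> ('v \<times> 'v) set \<Rightarrow> ('v \<Rightarrow> 'l) \<Rightarrow> 'l set \<Rightarrow> bool" where
  "phylo_net V E lab S \<longleftrightarrow>
     is_dag V E \<and> rooted V E \<and> labeled_in V E lab S \<and>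
     \<comment> \<open>(1)\<close>
     (\<forall>v\<in>V. indeg E v \<in> {0,1,2} \<and> outdeg E v \<in> {0,1,2} \<and> indeg E v \<noteq> outdeg E v) \<and>
     \<comment> \<open>(2)\<close>
     (\<forall>v\<in>V. outdeg E v = 2 \<longrightarrow> (\<exists>c. (v, c) \<in> E \<and> tree_node E c)) \<and>
     \<comment> \<open>(3a)\<close>
     (\<forall>h u1 u2. hybrid_node E h \<and> (u1, h) \<in> E \<and> (u2, h) \<in> E \<and> u1 \<noteq> u2 \<longrightarrow>
         (u1, u2) \<notin> E\<^sup>* \<and> (u2, u1) \<notin> E\<^sup>*) \<and>
     \<comment> \<open>(3b)\<close>
     (\<forall>u u1 u2 v v1 v2. hybrid_node E u \<and> hybrid_node E v \<and> u \<noteq> v \<and>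
         (u1, u) \<in> E \<and> (u2, u) \<in> E \<and> u1 \<noteq> u2 \<and>
         (v1, v) \<in> E \<and> (v2, v) \<in> E \<and> v1 \<noteq> v2 \<and> (u1, v1) \<in> E\<^sup>* \<longrightarrow>
         (v2, u1) \<notin> E\<^sup>* \<and> (v2, u2) \<notin> E\<^sup>*)"

definition class_I :: "'v set \<Rightarrow> ('v \<times> 'v) set \<Rightarrow> bool" where
  "class_I V E \<longleftrightarrow>
     (\<forall>h\<in>V. hybrid_node E h \<longrightarrow> (\<exists>p. (p, h) \<in> E \<and> tree_node E p))"

definition net_iso :: "'v set \<Rightarrow> ('v \<times> 'v) set \<Rightarrow> ('v \<Rightarrow> 'l) \<Rightarrow>
                       'w set \<Rightarrow> ('w \<times> 'w) set \<Rightarrow> ('w \<Rightarrow> 'l) \<Rightarrow> bool" where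
  "net_iso V1 E1 l1 V2 E2 l2 \<longleftrightarrow>
     (\<exists>f. bij_betw f V1 V2 \<and>
          (\<forall>u\<in>V1. \<forall>v\<in>V1. (u, v) \<in> E1 \<longleftrightarrow> (f u, f v) \<in> E2) \<and>
          (\<forall>s\<in>leaves V1 E1. l2 (f s) = l1 s))"

definition Cset :: "'v set \<Rightarrow> ('v \<times> 'v) set \<Rightarrow> 'v \<Rightarrow> 'v set" where
  "Cset V E u = {s \<in> leaves V E. (u, s) \<in> E\<^sup>*}"

definition Aset :: "'v set \<Rightarrow> ('v \<times> 'v) set \<Rightarrow> 'v \<Rightarrow> 'v set" where
  "Aset V E u = {s \<in> Cset V E u. \<forall>r\<in>roots V E. \<forall>xs\<in>paths E r s. u \<in> set xs}"

definition Bset :: "'v set \<Rightarrow> ('v \<times> 'v) set \<Rightarrow> 'v \<Rightarrow> 'v set" where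
  "Bset V E u = Cset V E u - Aset V E u"

definition hyb_weight :: "('v \<times> 'v) set \<Rightarrow> 'v \<Rightarrow> 'v \<Rightarrow> nat" where
  "hyb_weight E v s = Max ((\<lambda>xs. length (filter (hybrid_node E) xs)) ` paths E v s)"

definition theta_arc :: "'v set \<Rightarrow> ('v \<times> 'v) set \<Rightarrow> ('v \<Rightarrow> 'l) \<Rightarrow> 'l set \<Rightarrow> 'v \<times> 'v
                         \<Rightarrow> ('l \<times> nat) set \<times> ('l \<times> nat) set \<times> 'l set" where
  "theta_arc V E lab S e = (case e of (u, v) \<Rightarrow>
     ((\<lambda>s. (lab s, hyb_weight E v s)) ` Aset V E v,
      (\<lambda>s. (lab s, hyb_weight E v s)) ` Bset V E v,
      S - lab ` Cset V E v))"

definition thetaAB :: "'v set \<Rightarrow> ('v \<times> 'v) set \<Rightarrow> ('v \<Rightarrow> 'l) \<Rightarrow> 'l set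
                       \<Rightarrow> (('l \<times> nat) set \<times> ('l \<times> nat) set \<times> 'l set) set" where
  "thetaAB V E lab S = theta_arc V E lab S ` E"

end

theory Submission imports Defs begin

fun pf :: "('v \<times> 'v) list \<Rightarrow> nat \<Rightarrow> 'v \<Rightarrow> 'v list list" where
  "pf es 0 u = [[u]]"
| "pf es (Suc n) u = [u] # concat (map (\<lambda>w. map ((#) u) (pf es n w)) (map snd (filter (\<lambda>e. fst e = u) es)))"

lemma pf_char:
  "xs \<in> set (pf es n u) \<longleftrightarrow> xs \<noteq> [] \<and> hd xs = u \<and> successively (\<lambda>a b. (a, b) \<in> set es) xs \<and> length xs \<le> Suc n"
proof (induction n arbitrary: u xs)
  case 0
  then show ?case by (cases xs) auto
next
  case (Suc n)
  show ?case
  proof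
    assume "xs \<in> set (pf es (Suc n) u)"
    then show "xs \<noteq> [] \<and> hd xs = u \<and> successively (\<lambda>a b. (a, b) \<in> set es) xs \<and> length xs \<le> Suc (Suc n)"
      using Suc.IH by (cases "xs = [u]") (auto simp: successively_Cons)
  next
    assume H: "xs \<noteq> [] \<and> hd xs = u \<and> successively (\<lambda>a b. (a, b) \<in> set es) xs \<and> length xs \<le> Suc (Suc n)"
    show "xs \<in> set (pf es (Suc n) u)"
    proof (cases xs)
      case Nil then show ?thesis using H by simp
    next
      case (Cons a ys)
      show ?thesis
      proof (cases ys)
        case Nil then show ?thesis using H Cons by simp
      next
        case (Cons w zs)
        have "(u, w) \<in> set es" "ys \<in> set (pf es n w)"
          using H \<open>xs = a # ys\<close> Cons Suc.IH by (auto simp: successively_Cons)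
        then show ?thesis using H \<open>xs = a # ys\<close> Cons by force
      qed
    qed
  qed
qed

lemma pf_nosrc: "u \<notin> fst ` set es \<Longrightarrow> pf es n u = [[u]]"
proof (cases n)
  case (Suc m)
  assume "u \<notin> fst ` set es"
  then have "filter (\<lambda>e. fst e = u) es = []" by (force simp: filter_empty_conv)
  then show ?thesis using Suc by simp
qed simp

lemma pf_stable:
  assumes fp: "\<forall>u \<in> fst ` set es. pf es (Suc N) u = pf es N u"
  shows "pf es (N + k) u = pf es N u"
proof (induction k arbitrary: u)
  case 0 then show ?case by simp
next
  case (Suc k)
  show ?case
  proof (cases "u \<in> fst ` set es")
    case True
    have "pf es (N + Suc k) u = pf es (Suc (N + k)) u" by simp
    also have "\<dots> = pf es (Suc N) u" using Suc.IH by simp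
    also have "\<dots> = pf es N u" using fp True by blast
    finally show ?thesis .
  next
    case False then show ?thesis by (metis pf_nosrc)
  qed
qed

lemma paths_pf:
  assumes fp: "\<forall>u \<in> fst ` set es. pf es (Suc N) u = pf es N u"
  shows "paths (set es) u v = set (filter (\<lambda>xs. last xs = v) (pf es N u))"
proof -
  have "xs \<in> set (pf es N u)" if "xs \<in> paths (set es) u v" for xs
  proof -
    have "xs \<in> set (pf es (N + length xs) u)" using that by (auto simp: paths_def pf_char)
    then show ?thesis using pf_stable[OF fp] by simp
  qed
  moreover have "xs \<in> paths (set es) u v" if "xs \<in> set (pf es N u)" "last xs = v" for xs
    using that by (auto simp: paths_def pf_char)
  moreover have "last xs = v" if "xs \<in> paths (set es) u v" for xs
    using that by (simp add: paths_def)
  ultimately show ?thesis by auto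
qed

lemma rtrancl_paths: "(a, b) \<in> E\<^sup>* \<longleftrightarrow> paths E a b \<noteq> {}"
proof
  assume "(a, b) \<in> E\<^sup>*"
  then show "paths E a b \<noteq> {}"
  proof (induction rule: rtrancl_induct)
    case base
    have "[a] \<in> paths E a a" by (simp add: paths_def)
    then show ?case by blast
  next
    case (step y z)
    then obtain xs where "xs \<in> paths E a y" by blast
    then have "xs @ [z] \<in> paths E a z" using step(2)
      by (auto simp: paths_def successively_append_iff)
    then show ?case by blast
  qed
next
  assume "paths E a b \<noteq> {}"
  then obtain xs where xs: "xs \<noteq> []" "hd xs = a" "last xs = b" "successively (\<lambda>a b. (a, b) \<in> E) xs"
    by (auto simp: paths_def)
  then show "(a, b) \<in> E\<^sup>*"
  proof (induction xs arbitrary: a)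
    case Nil then show ?case by simp
  next
    case (Cons x ys)
    show ?case
    proof (cases ys)
      case Nil then show ?thesis using Cons.prems by simp
    next
      case (Cons w zs)
      then have "(x, w) \<in> E" "successively (\<lambda>a b. (a, b) \<in> E) ys" using Cons.prems by (auto simp: successively_Cons)
      moreover have "(w, b) \<in> E\<^sup>*" using Cons.IH[of w] Cons.prems \<open>ys = w # zs\<close> calculation by auto
      ultimately show ?thesis using Cons.prems by auto
    qed
  qed
qed

lemma indeg_list: "indeg (set es) v = length (remdups (map fst (filter (\<lambda>e. snd e = v) es)))"
proof -
  have "{u. (u, v) \<in> set es} = set (map fst (filter (\<lambda>e. snd e = v) es))" by force
  then show ?thesis by (simp add: indeg_def length_remdups_card_conv)
qed

lemma outdeg_list: "outdeg (set es) v = length (remdups (map snd (filter (\<lambda>e. fst e = v) es)))"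
proof -
  have "{u. (v, u) \<in> set es} = set (map snd (filter (\<lambda>e. fst e = v) es))" by force
  then show ?thesis by (simp add: outdeg_def length_remdups_card_conv)
qed

lemma leaves_list: "leaves (set vs) E = set (filter (\<lambda>v. outdeg E v = 0) vs)"
  by (auto simp: leaves_def)
lemma roots_list: "roots (set vs) E = set (filter (\<lambda>v. indeg E v = 0) vs)"
  by (auto simp: roots_def)

lemma ex1_set: "(\<exists>!r. r \<in> set xs) \<longleftrightarrow> length (remdups xs) = 1"
proof -
  have "(\<exists>!r. r \<in> set xs) \<longleftrightarrow> (\<exists>x. set xs = {x})"
  proof
    assume "\<exists>!r. r \<in> set xs"
    then obtain x where "x \<in> set xs" "\<forall>y. y \<in> set xs \<longrightarrow> y = x" by blast
    then have "set xs = {x}" by blast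
    then show "\<exists>x. set xs = {x}" ..
  qed auto
  also have "\<dots> \<longleftrightarrow> card (set xs) = 1" using card_1_singleton_iff by (metis One_nat_def)
  finally show ?thesis by (simp add: length_remdups_card_conv)
qed

lemma bij_list: "bij_betw f (set xs) S \<longleftrightarrow> distinct (map f (remdups xs)) \<and> f ` set xs = S"
  unfolding bij_betw_def by (metis distinct_map distinct_remdups set_remdups)

lemma acyclic_list: "acyclic E \<longleftrightarrow> (\<forall>e\<in>E. (snd e, fst e) \<notin> E\<^sup>*)"
  unfolding acyclic_def trancl_unfold_left by fastforce

lemma phylo_net_list:
  "phylo_net (set vs) (set es) lab S \<longleftrightarrow>
   is_dag (set vs) (set es) \<and> rooted (set vs) (set es) \<and> labeled_in (set vs) (set es) lab S \<and>
   (\<forall>v\<in>set vs. indeg (set es) v \<in> {0,1,2} \<and> outdeg (set es) v \<in> {0,1,2} \<and> indeg (set es) v \<noteq> outdeg (set es) v) \<and>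
   (\<forall>v\<in>set vs. outdeg (set es) v = 2 \<longrightarrow> (\<exists>e\<in>set es. fst e = v \<and> tree_node (set es) (snd e))) \<and>
   (\<forall>e1\<in>set (filter (\<lambda>e. hybrid_node (set es) (snd e)) es). \<forall>e2\<in>set es.
      snd e2 = snd e1 \<and> fst e1 \<noteq> fst e2 \<longrightarrow>
      (fst e1, fst e2) \<notin> (set es)\<^sup>* \<and> (fst e2, fst e1) \<notin> (set es)\<^sup>*) \<and>
   (\<forall>e1\<in>set (filter (\<lambda>e. hybrid_node (set es) (snd e)) es). \<forall>e2\<in>set es.
    \<forall>e3\<in>set (filter (\<lambda>e. hybrid_node (set es) (snd e)) es). \<forall>e4\<in>set es.
      snd e2 = snd e1 \<and> snd e4 = snd e3 \<and> snd e1 \<noteq> snd e3 \<and> fst e1 \<noteq> fst e2 \<and> fst e3 \<noteq> fst e4 \<and>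
      (fst e1, fst e3) \<in> (set es)\<^sup>* \<longrightarrow>
      (fst e4, fst e1) \<notin> (set es)\<^sup>* \<and> (fst e4, fst e2) \<notin> (set es)\<^sup>*)"
proof -
  let ?E = "set es"
  have a: "(\<forall>v\<in>set vs. outdeg ?E v = 2 \<longrightarrow> (\<exists>c. (v, c) \<in> ?E \<and> tree_node ?E c)) \<longleftrightarrow>
           (\<forall>v\<in>set vs. outdeg ?E v = 2 \<longrightarrow> (\<exists>e\<in>?E. fst e = v \<and> tree_node ?E (snd e)))"
    by force
  have b: "(\<forall>h u1 u2. hybrid_node ?E h \<and> (u1, h) \<in> ?E \<and> (u2, h) \<in> ?E \<and> u1 \<noteq> u2 \<longrightarrow>
         (u1, u2) \<notin> ?E\<^sup>* \<and> (u2, u1) \<notin> ?E\<^sup>*) \<longleftrightarrow>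
     (\<forall>e1\<in>set (filter (\<lambda>e. hybrid_node ?E (snd e)) es). \<forall>e2\<in>?E.
      snd e2 = snd e1 \<and> fst e1 \<noteq> fst e2 \<longrightarrow>
      (fst e1, fst e2) \<notin> ?E\<^sup>* \<and> (fst e2, fst e1) \<notin> ?E\<^sup>*)"
    by force
  have c: "(\<forall>u u1 u2 v v1 v2. hybrid_node ?E u \<and> hybrid_node ?E v \<and> u \<noteq> v \<and>
         (u1, u) \<in> ?E \<and> (u2, u) \<in> ?E \<and> u1 \<noteq> u2 \<and>
         (v1, v) \<in> ?E \<and> (v2, v) \<in> ?E \<and> v1 \<noteq> v2 \<and> (u1, v1) \<in> ?E\<^sup>* \<longrightarrow>
         (v2, u1) \<notin> ?E\<^sup>* \<and> (v2, u2) \<notin> ?E\<^sup>*) \<longleftrightarrow>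
    (\<forall>e1\<in>set (filter (\<lambda>e. hybrid_node ?E (snd e)) es). \<forall>e2\<in>?E.
    \<forall>e3\<in>set (filter (\<lambda>e. hybrid_node ?E (snd e)) es). \<forall>e4\<in>?E.
      snd e2 = snd e1 \<and> snd e4 = snd e3 \<and> snd e1 \<noteq> snd e3 \<and> fst e1 \<noteq> fst e2 \<and> fst e3 \<noteq> fst e4 \<and>
      (fst e1, fst e3) \<in> ?E\<^sup>* \<longrightarrow>
      (fst e4, fst e1) \<notin> ?E\<^sup>* \<and> (fst e4, fst e2) \<notin> ?E\<^sup>*)" (is "?CL \<longleftrightarrow> ?CR")
  proof
    assume H: ?CL
    show ?CR
    proof (intro ballI impI)
      fix e1 e2 e3 e4
      assume m: "e1 \<in> set (filter (\<lambda>e. hybrid_node ?E (snd e)) es)" "e2 \<in> ?E"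
        "e3 \<in> set (filter (\<lambda>e. hybrid_node ?E (snd e)) es)" "e4 \<in> ?E"
      and p: "snd e2 = snd e1 \<and> snd e4 = snd e3 \<and> snd e1 \<noteq> snd e3 \<and> fst e1 \<noteq> fst e2 \<and> fst e3 \<noteq> fst e4 \<and>
      (fst e1, fst e3) \<in> ?E\<^sup>*"
      have e1': "(fst e1, snd e1) \<in> ?E" "hybrid_node ?E (snd e1)" using m(1) by auto
      have e3': "(fst e3, snd e3) \<in> ?E" "hybrid_node ?E (snd e3)" using m(3) by auto
      have e2': "(fst e2, snd e1) \<in> ?E" using m(2) p by (metis prod.collapse)
      have e4': "(fst e4, snd e3) \<in> ?E" using m(4) p by (metis prod.collapse)
      show "(fst e4, fst e1) \<notin> ?E\<^sup>* \<and> (fst e4, fst e2) \<notin> ?E\<^sup>*"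
        using H[rule_format, of "snd e1" "snd e3" "fst e1" "fst e2" "fst e3" "fst e4"] e1' e2' e3' e4' p by blast
    qed
  next
    assume H: ?CR
    show ?CL
    proof (intro allI impI)
      fix u u1 u2 v v1 v2
      assume p: "hybrid_node ?E u \<and> hybrid_node ?E v \<and> u \<noteq> v \<and>
         (u1, u) \<in> ?E \<and> (u2, u) \<in> ?E \<and> u1 \<noteq> u2 \<and>
         (v1, v) \<in> ?E \<and> (v2, v) \<in> ?E \<and> v1 \<noteq> v2 \<and> (u1, v1) \<in> ?E\<^sup>*"
      show "(v2, u1) \<notin> ?E\<^sup>* \<and> (v2, u2) \<notin> ?E\<^sup>*"
        using H[rule_format, of "(u1,u)" "(u2,u)" "(v1,v)" "(v2,v)"] p by auto
    qed
  qed
  show ?thesis by (simp only: phylo_net_def a b c)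
qed

fun titer :: "('a \<times> 'a) list \<Rightarrow> nat \<Rightarrow> ('a \<times> 'a) list \<Rightarrow> ('a \<times> 'a) list" where
  "titer es 0 T = T"
| "titer es (Suc n) T = titer es n (remdups (T @ [(fst x, snd y). x \<leftarrow> T, y \<leftarrow> es, snd x = fst y]))"

lemma titer_sound: "set T \<subseteq> (set es)\<^sup>+ \<Longrightarrow> set (titer es n T) \<subseteq> (set es)\<^sup>+"
proof (induction n arbitrary: T)
  case 0 then show ?case by simp
next
  case (Suc n)
  have "set (remdups (T @ [(fst x, snd y). x \<leftarrow> T, y \<leftarrow> es, snd x = fst y])) \<subseteq> (set es)\<^sup>+"
    using Suc.prems by (force intro: trancl_into_trancl)
  then show ?case using Suc.IH by simp
qed

lemma trancl_closed:
  assumes "set es \<subseteq> set T" "\<forall>x\<in>set T. \<forall>y\<in>set es. snd x = fst y \<longrightarrow> (fst x, snd y) \<in> set T"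
  shows "(set es)\<^sup>+ \<subseteq> set T"
proof
  fix p assume "p \<in> (set es)\<^sup>+"
  then show "p \<in> set T"
  proof (cases p)
    case (Pair a b)
    have "(a, b) \<in> (set es)\<^sup>+" using \<open>p \<in> _\<close> Pair by simp
    then have "(a, b) \<in> set T"
    proof (induction rule: trancl_induct)
      case (base y) then show ?case using assms(1) by auto
    next
      case (step y z) then show ?case using assms(2) by force
    qed
    then show ?thesis using Pair by simp
  qed
qed

lemma trancl_list:
  assumes "set es \<subseteq> set T" "\<forall>x\<in>set T. \<forall>y\<in>set es. snd x = fst y \<longrightarrow> (fst x, snd y) \<in> set T"
    "set T \<subseteq> set (titer es n es)"
  shows "(set es)\<^sup>+ = set T"
proof -
  have "set es \<subseteq> (set es)\<^sup>+" by auto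
  then show ?thesis using trancl_closed[OF assms(1,2)] titer_sound[of es es n] assms(3) by auto
qed


lemma Cset_list: "Cset (set vs) E u = set (filter (\<lambda>s. (u, s) \<in> E\<^sup>*) (filter (\<lambda>v. outdeg E v = 0) vs))"
  by (auto simp: Cset_def leaves_def)

lemma Aset_list: "Cset V E u = set cs \<Longrightarrow>
  Aset V E u = set (filter (\<lambda>s. \<forall>r\<in>roots V E. \<forall>xs\<in>paths E r s. u \<in> set xs) cs)"
  by (auto simp: Aset_def)

lemma Aset_list': "Aset (set vs) E u = set (filter (\<lambda>s. \<forall>r\<in>roots (set vs) E. \<forall>xs\<in>paths E r s. u \<in> set xs)
   (filter (\<lambda>s. (u, s) \<in> E\<^sup>*) (filter (\<lambda>v. outdeg E v = 0) vs)))"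
  by (rule Aset_list[OF Cset_list])

lemma Bset_list: "Bset V E u = Cset V E u - Aset V E u"
  by (simp add: Bset_def)


lemma theta_arc_fun: "theta_arc V E lab S = (\<lambda>(u, v).
     ((\<lambda>s. (lab s, hyb_weight E v s)) ` Aset V E v,
      (\<lambda>s. (lab s, hyb_weight E v s)) ` Bset V E v,
      S - lab ` Cset V E v))"
  by (rule ext) (simp add: theta_arc_def)


lemma hybrid_node_fun: "hybrid_node E = (\<lambda>v. 1 < indeg E v)"
  by (rule ext) (simp add: hybrid_node_def)

lemma thetaAB_list: "thetaAB V (set es) lab S = set (map (theta_arc V (set es) lab S) es)"
  by (simp add: thetaAB_def)

definition "es1 = ([(8,3), (9,4), (9,5), (6,7), (6,10), (10,1), (8,11), (11,9), (10,11), (7,12), (12,2), (7,13), (13,8), (12,14), (14,5), (13,14)] :: (nat \<times> nat) list)"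
definition "T1 = ([(6,1), (6,2), (6,3), (6,4), (6,5), (6,7), (6,8), (6,9), (6,10), (6,11), (6,12), (6,13), (6,14), (7,2), (7,3), (7,4), (7,5), (7,8), (7,9), (7,11), (7,12), (7,13), (7,14), (8,3), (8,4), (8,5), (8,9), (8,11), (9,4), (9,5), (10,1), (10,4), (10,5), (10,9), (10,11), (11,4), (11,5), (11,9), (12,2), (12,5), (12,14), (13,3), (13,4), (13,5), (13,8), (13,9), (13,11), (13,14), (14,5)] :: (nat \<times> nat) list)"

lemma tr1: "(set es1)\<^sup>+ = set T1"
  by (rule trancl_list[where n=15]) code_simp+

lemma fp1: "\<forall>u \<in> fst ` set es1. pf es1 (Suc 6) u = pf es1 6 u" by code_simp

definition "es2 = ([(8,3), (9,4), (9,5), (7,8), (6,7), (6,10), (7,11), (11,2), (10,12), (12,5), (11,12), (10,13), (13,1), (8,14), (14,9), (13,14)] :: (nat \<times> nat) list)"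
definition "T2 = ([(6,1), (6,2), (6,3), (6,4), (6,5), (6,7), (6,8), (6,9), (6,10), (6,11), (6,12), (6,13), (6,14), (7,2), (7,3), (7,4), (7,5), (7,8), (7,9), (7,11), (7,12), (7,14), (8,3), (8,4), (8,5), (8,9), (8,14), (9,4), (9,5), (10,1), (10,4), (10,5), (10,9), (10,12), (10,13), (10,14), (11,2), (11,5), (11,12), (12,5), (13,1), (13,4), (13,5), (13,9), (13,14), (14,4), (14,5), (14,9)] :: (nat \<times> nat) list)"

lemma tr2: "(set es2)\<^sup>+ = set T2"
  by (rule trancl_list[where n=15]) code_simp+

lemma fp2: "\<forall>u \<in> fst ` set es2. pf es2 (Suc 5) u = pf es2 5 u" by code_simp

lemma S5: "({1..5}::nat set) = set [1,2,3,4,5]" by auto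

lemma class_I_list: "class_I (set vs) (set es) \<longleftrightarrow>
  (\<forall>h\<in>set vs. hybrid_node (set es) h \<longrightarrow> (\<exists>e\<in>set es. snd e = h \<and> tree_node (set es) (fst e)))"
  unfolding class_I_def by force

lemma theta_eq: "thetaAB (set [1..<15]) (set es1) id {1..5} = thetaAB (set [1..<15]) (set es2) id {1..5}"
  apply (simp only: thetaAB_list theta_arc_fun Bset_list Aset_list' Cset_list roots_list
     indeg_list outdeg_list rtrancl_eq_or_trancl tr1 tr2 paths_pf[OF fp1] paths_pf[OF fp2] hyb_weight_def
     hybrid_node_def hybrid_node_fun S5 prod.case)
  apply code_simp
  done

lemma phylo1: "phylo_net (set [1..<15]) (set es1) id {1..5}"
  apply (simp only: phylo_net_list is_dag_def rooted_def labeled_in_def indeg_list outdeg_list leaves_list roots_list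
    ex1_set bij_list rtrancl_eq_or_trancl tr1 tree_node_def hybrid_node_def acyclic_list S5 List.finite_set)
  apply code_simp
  done

lemma phylo2: "phylo_net (set [1..<15]) (set es2) id {1..5}"
  apply (simp only: phylo_net_list is_dag_def rooted_def labeled_in_def indeg_list outdeg_list leaves_list roots_list
    ex1_set bij_list rtrancl_eq_or_trancl tr2 tree_node_def hybrid_node_def acyclic_list S5 List.finite_set)
  apply code_simp
  done

lemma classI1: "class_I (set [1..<15]) (set es1)"
  apply (simp only: class_I_list indeg_list tree_node_def hybrid_node_def)
  apply code_simp
  done

lemma classI2: "class_I (set [1..<15]) (set es2)"
  apply (simp only: class_I_list indeg_list tree_node_def hybrid_node_def)
  apply code_simp
  done

lemma leaves1: "leaves (set [1..<15]) (set es1) = set [1,2,3,4,5]"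
  apply (simp only: leaves_list outdeg_list)
  apply code_simp
  done

lemma not_iso: "\<not> net_iso (set [1..<15]) (set es1) id (set [1..<15]) (set es2) (id :: nat \<Rightarrow> nat)"
proof
  assume "net_iso (set [1..<15]) (set es1) id (set [1..<15]) (set es2) (id :: nat \<Rightarrow> nat)"
  then obtain f where bij: "bij_betw f (set [1..<15]) (set [1..<15::nat])"
    and edg: "\<forall>u\<in>set [1..<15]. \<forall>v\<in>set [1..<15]. (u, v) \<in> set es1 \<longleftrightarrow> (f u, f v) \<in> set es2"
    and lv: "\<forall>s\<in>leaves (set [1..<15]) (set es1). id (f s) = id s"
    unfolding net_iso_def by blast
  have lv': "\<forall>s\<in>set [1,2,3,4,5]. id (f s) = id s" using lv unfolding leaves1 .
  have f1: "f 1 = 1" using bspec[OF lv', of 1] by simp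
  have f5: "f 5 = 5" using bspec[OF lv', of 5] by simp
  have im: "f ` set [1..<15] = set [1..<15::nat]" using bij by (simp add: bij_betw_def)
  have m10: "(10::nat) \<in> f ` set [1..<15]" unfolding im by simp
  have m13: "(13::nat) \<in> f ` set [1..<15]" unfolding im by simp
  have m12: "(12::nat) \<in> f ` set [1..<15]" unfolding im by simp
  obtain g where g: "g \<in> set [1..<15::nat]" "f g = 10" using m10 by (rule imageE) simp
  obtain a where a: "a \<in> set [1..<15::nat]" "f a = 13" using m13 by (rule imageE) simp
  obtain b where b: "b \<in> set [1..<15::nat]" "f b = 12" using m12 by (rule imageE) simp
  have in2: "(10, 13) \<in> set es2" "(13, 1) \<in> set es2" "(10, 12) \<in> set es2" "(12, 5) \<in> set es2"
    by (simp_all add: es2_def)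
  have one: "(1::nat) \<in> set [1..<15]" and five: "(5::nat) \<in> set [1..<15]" by simp_all
  have ga: "(g, a) \<in> set es1" using edg[rule_format, OF g(1) a(1)] in2(1) g(2) a(2) by simp
  have a1: "(a, 1) \<in> set es1" using edg[rule_format, OF a(1) one] in2(2) a(2) f1 by simp
  have gb: "(g, b) \<in> set es1" using edg[rule_format, OF g(1) b(1)] in2(3) g(2) b(2) by simp
  have b5: "(b, 5) \<in> set es1" using edg[rule_format, OF b(1) five] in2(4) b(2) f5 by simp
  from a1 have "a = 10" by (simp add: es1_def)
  with ga have "g = 6" by (simp add: es1_def)
  with gb have "b = 7 \<or> b = 10" by (simp add: es1_def)
  with b5 show False by (auto simp: es1_def)
qed

theorem mainTheorem1:
  shows "\<exists>(V1 :: nat set) E1 (l1 :: nat \<Rightarrow> nat) (V2 :: nat set) E2 (l2 :: nat \<Rightarrow> nat).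
     phylo_net V1 E1 l1 {1..5} \<and> class_I V1 E1 \<and>
     phylo_net V2 E2 l2 {1..5} \<and> class_I V2 E2 \<and>
     \<not> net_iso V1 E1 l1 V2 E2 l2 \<and>
     thetaAB V1 E1 l1 {1..5} = thetaAB V2 E2 l2 {1..5}"
  using phylo1 classI1 phylo2 classI2 not_iso theta_eq by blast

end
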